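(* Let $V$ be a finite family of L-frames all anchored at $D$ from above, $G$ its intersection graph, and $\mathcal B,\mathcal R\subseteq V$ disjoint dominating sets of $G$. Let $H=(\mathcal B\cup\mathcal R,E')$ be the bipartite graph and its drawing defined in the context. Then in this drawing no two arcs cross except at common endpoints: no two top arcs cross, no two down arcs cross, no mixed arc crosses a top arc, no mixed arc crosses a down arc, and no two mixed arcs cross. In particular $H$ is planar.
   Context: Fix a line $D$ of slope $-1$. An L-frame is the union of a closed horizontal segment and a closed vertical segment sharing an endpoint, its corner $\mathrm{cor}(\cdot)$. An L-frame is anchored at $D$ from above if its corner is on $D$, its horizontal segment goes right from the corner and its vertical segment goes up. For intersecting L-frames $L_1,L_2$ anchored from above, $L_1$ intersects $L_2$ from the left if $x(\mathrm{cor}(L_1))\le x(\mathrm{cor}(L_2))$, and from below if $x(\mathrm{cor}(L_1))\ge x(\mathrm{cor}(L_2))$. Definition of $H$: for each $u\in V$, among all pairs $(b,r)\in\mathcal B\times\mathcal R$ such that both $b$ and $r$ intersect $u$ (an L-frame intersects itself), choose one pair minimizing the Euclidean distance $\mathrm{dist}(\mathrm{cor}(b),\mathrm{cor}(r))$ and put $(b,r)$ in $E'$; $u$ is called a witness of $(b,r)$. An arc $(b,r)\in E'$ is a top arc if it has a witness $u$ that both $b$ and $r$ intersect from the left (fix such $u$ as $w(b,r)$); otherwise it is a down arc if it has a witness $v$ that both $b$ and $r$ intersect from below (fix such $v$ as $w(b,r)$); otherwise it is a mixed arc, and $w(b,r)$ is any witness (which $b$ and $r$ intersect from different sides). Drawing: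 vertex $u$ is placed at $\mathrm{cor}(u)\in D$. For an arc $(p,q)$ with $x(\mathrm{cor}(p))<x(\mathrm{cor}(q))$: a top (resp. down) arc is drawn as the half of the circle with diameter segment $\mathrm{cor}(p)\mathrm{cor}(q)$ lying above (resp. below) $D$. For a mixed arc, where $p$ intersects $w=w(p,q)$ from the left and $q$ intersects $w$ from below (so $x(\mathrm{cor}(p))<x(\mathrm{cor}(w))<x(\mathrm{cor}(q))$), it is drawn as the half of the circle with diameter $\mathrm{cor}(p)\mathrm{cor}(w)$ above $D$ followed by the half of the circle with diameter $\mathrm{cor}(w)\mathrm{cor}(q)$ below $D$. *)

theory Defs
  imports "HOL-Analysis.Analysis"
begin

definition lineD :: "real \<Rightarrow> (real \<times> real) set" where
  "lineD c = {p. fst p + snd p = c}"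

text \<open>An L-frame whose horizontal segment goes right from its corner and whose
  vertical segment goes up from its corner is described by the triple
  (corner, length of horizontal segment, length of vertical segment).\<close>

type_synonym lframe = "(real \<times> real) \<times> real \<times> real"

definition cor :: "lframe \<Rightarrow> real \<times> real" where
  "cor L = fst L"

definition hlen :: "lframe \<Rightarrow> real" where
  "hlen L = fst (snd L)"

definition vlen :: "lframe \<Rightarrow> real" where
  "vlen L = snd (snd L)"

definition lset :: "lframe \<Rightarrow> (real \<times> real) set" where
  "lset L = closed_segment (cor L) (cor L + (hlen L, 0))
          \<union> closed_segment (cor L) (cor L + (0, vlen L))"

definition anchored_above :: "real \<Rightarrow> lframe \<Rightarrow> bool" where
  "anchored_above c L \<longleftrightarrow> cor L \<in> lineD c \<and> hlen L > 0 \<and> vlen L > 0"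

definition intersects :: "lframe \<Rightarrow> lframe \<Rightarrow> bool" where
  "intersects L1 L2 \<longleftrightarrow> lset L1 \<inter> lset L2 \<noteq> {}"

definition from_left :: "lframe \<Rightarrow> lframe \<Rightarrow> bool" where
  "from_left L1 L2 \<longleftrightarrow> intersects L1 L2 \<and> fst (cor L1) \<le> fst (cor L2)"

definition from_below :: "lframe \<Rightarrow> lframe \<Rightarrow> bool" where
  "from_below L1 L2 \<longleftrightarrow> intersects L1 L2 \<and> fst (cor L1) \<ge> fst (cor L2)"

definition ig_adj :: "lframe set \<Rightarrow> lframe \<Rightarrow> lframe \<Rightarrow> bool" where
  "ig_adj V u v \<longleftrightarrow> u \<in> V \<and> v \<in> V \<and> u \<noteq> v \<and> intersects u v"

definition dominating :: "lframe set \<Rightarrow> lframe set \<Rightarrow> bool" where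
  "dominating V S \<longleftrightarrow> S \<subseteq> V \<and> (\<forall>u\<in>V. u \<notin> S \<longrightarrow> (\<exists>s\<in>S. ig_adj V s u))"

definition valid_selection ::
  "lframe set \<Rightarrow> lframe set \<Rightarrow> lframe set \<Rightarrow> (lframe \<Rightarrow> lframe \<times> lframe) \<Rightarrow> bool" where
  "valid_selection V B R sel \<longleftrightarrow>
     (\<forall>u\<in>V. fst (sel u) \<in> B \<and> snd (sel u) \<in> R
        \<and> intersects (fst (sel u)) u \<and> intersects (snd (sel u)) u
        \<and> (\<forall>b\<in>B. \<forall>r\<in>R. intersects b u \<and> intersects r u \<longrightarrow>
              dist (cor (fst (sel u))) (cor (snd (sel u))) \<le> dist (cor b) (cor r)))"

definition arcs :: "lframe set \<Rightarrow> (lframe \<Rightarrow> lframe \<times> lframe) \<Rightarrow> (lframe \<times> lframe) set" where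
  "arcs V sel = sel ` V"

definition witness ::
  "lframe set \<Rightarrow> (lframe \<Rightarrow> lframe \<times> lframe) \<Rightarrow> lframe \<Rightarrow> lframe \<times> lframe \<Rightarrow> bool" where
  "witness V sel u e \<longleftrightarrow> u \<in> V \<and> sel u = e"

definition top_arc :: "lframe set \<Rightarrow> (lframe \<Rightarrow> lframe \<times> lframe) \<Rightarrow> lframe \<times> lframe \<Rightarrow> bool" where
  "top_arc V sel e \<longleftrightarrow>
     (\<exists>u. witness V sel u e \<and> from_left (fst e) u \<and> from_left (snd e) u)"

definition down_arc :: "lframe set \<Rightarrow> (lframe \<Rightarrow> lframe \<times> lframe) \<Rightarrow> lframe \<times> lframe \<Rightarrow> bool" where
  "down_arc V sel e \<longleftrightarrow> \<not> top_arc V sel e \<and>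
     (\<exists>v. witness V sel v e \<and> from_below (fst e) v \<and> from_below (snd e) v)"

definition mixed_arc :: "lframe set \<Rightarrow> (lframe \<Rightarrow> lframe \<times> lframe) \<Rightarrow> lframe \<times> lframe \<Rightarrow> bool" where
  "mixed_arc V sel e \<longleftrightarrow> e \<in> arcs V sel \<and> \<not> top_arc V sel e \<and> \<not> down_arc V sel e"

definition valid_witness_choice ::
  "lframe set \<Rightarrow> (lframe \<Rightarrow> lframe \<times> lframe) \<Rightarrow> (lframe \<times> lframe \<Rightarrow> lframe) \<Rightarrow> bool" where
  "valid_witness_choice V sel wit \<longleftrightarrow>
     (\<forall>e\<in>arcs V sel. witness V sel (wit e) e
        \<and> (top_arc V sel e \<longrightarrow> from_left (fst e) (wit e) \<and> from_left (snd e) (wit e))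
        \<and> (down_arc V sel e \<longrightarrow> from_below (fst e) (wit e) \<and> from_below (snd e) (wit e)))"

definition upper_half :: "real \<Rightarrow> real \<times> real \<Rightarrow> real \<times> real \<Rightarrow> (real \<times> real) set" where
  "upper_half c P Q = {z. dist z (midpoint P Q) = dist P Q / 2 \<and> fst z + snd z \<ge> c}"

definition lower_half :: "real \<Rightarrow> real \<times> real \<Rightarrow> real \<times> real \<Rightarrow> (real \<times> real) set" where
  "lower_half c P Q = {z. dist z (midpoint P Q) = dist P Q / 2 \<and> fst z + snd z \<le> c}"

definition arc_curve ::
  "real \<Rightarrow> lframe set \<Rightarrow> (lframe \<Rightarrow> lframe \<times> lframe) \<Rightarrow> (lframe \<times> lframe \<Rightarrow> lframe)
     \<Rightarrow> lframe \<times> lframe \<Rightarrow> (real \<times> real) set" where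
  "arc_curve c V sel wit e =
     (if top_arc V sel e then upper_half c (cor (fst e)) (cor (snd e))
      else if down_arc V sel e then lower_half c (cor (fst e)) (cor (snd e))
      else (let w = wit e;
                (p, q) = (if from_left (fst e) w \<and> from_below (snd e) w
                          then (fst e, snd e) else (snd e, fst e))
            in upper_half c (cor p) (cor w) \<union> lower_half c (cor w) (cor q)))"

end

theory Submission
  imports Defs
begin


lemma hseg_mem:
  fixes x y h :: real
  assumes "h \<ge> 0"
  shows "z \<in> closed_segment (x,y) ((x,y) + (h,0)) \<longleftrightarrow> snd z = y \<and> x \<le> fst z \<and> fst z \<le> x + h"
proof -
  have "closed_segment (x,y) ((x,y) + (h,0)) = closed_segment x (x+h) \<times> {y}"
    by (subst closed_segment_same_snd) auto
  moreover have "closed_segment x (x+h) = {x..x+h}" 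
    using assms by (auto intro!: closed_segment_eq_real_ivl1)
  ultimately show ?thesis by (cases z) auto
qed

lemma vseg_mem:
  fixes x y h :: real
  assumes "h \<ge> 0"
  shows "z \<in> closed_segment (x,y) ((x,y) + (0,h)) \<longleftrightarrow> fst z = x \<and> y \<le> snd z \<and> snd z \<le> y + h"
proof -
  have "closed_segment (x,y) ((x,y) + (0,h)) = {x} \<times> closed_segment y (y+h)"
    by (subst closed_segment_same_fst) auto
  moreover have "closed_segment y (y+h) = {y..y+h}"
    using assms by (auto intro!: closed_segment_eq_real_ivl1)
  ultimately show ?thesis by (cases z) auto
qed

definition X :: "lframe \<Rightarrow> real" where "X L = fst (cor L)"

lemma cor_eq: "anchored_above c L \<Longrightarrow> cor L = (X L, c - X L)"
  unfolding anchored_above_def lineD_def X_def by (cases "cor L") auto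

lemma lset_mem:
  assumes "anchored_above c L"
  shows "z \<in> lset L \<longleftrightarrow> (snd z = c - X L \<and> X L \<le> fst z \<and> fst z \<le> X L + hlen L)
     \<or> (fst z = X L \<and> c - X L \<le> snd z \<and> snd z \<le> c - X L + vlen L)"
proof -
  have h: "hlen L > 0" "vlen L > 0" using assms by (auto simp: anchored_above_def)
  show ?thesis unfolding lset_def cor_eq[OF assms]
    using hseg_mem[of "hlen L" z "X L" "c - X L"] vseg_mem[of "vlen L" z "X L" "c - X L"] h by auto
qed

lemma int_char:
  assumes "anchored_above c A" "anchored_above c C" "X A < X C"
  shows "intersects A C \<longleftrightarrow> X C - X A \<le> hlen A \<and> X C - X A \<le> vlen C"
proof
  assume "intersects A C"
  then obtain z where "z \<in> lset A" "z \<in> lset C" unfolding intersects_def by auto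
  then show "X C - X A \<le> hlen A \<and> X C - X A \<le> vlen C"
    using assms lset_mem[OF assms(1)] lset_mem[OF assms(2)] by auto
next
  assume a: "X C - X A \<le> hlen A \<and> X C - X A \<le> vlen C"
  have "(X C, c - X A) \<in> lset A" "(X C, c - X A) \<in> lset C"
    using a assms lset_mem[OF assms(1)] lset_mem[OF assms(2)] by auto
  then show "intersects A C" unfolding intersects_def by auto
qed

lemma int_self: "intersects A A"
  unfolding intersects_def lset_def by auto

lemma int_sym: "intersects A C \<Longrightarrow> intersects C A"
  unfolding intersects_def by auto

lemma dist_cor:
  assumes "anchored_above c A" "anchored_above c C"
  shows "dist (cor A) (cor C) = sqrt 2 * \<bar>X A - X C\<bar>"
proof -
  have "dist (cor A) (cor C) = sqrt ((X A - X C)^2 + (X A - X C)^2)"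
    unfolding cor_eq[OF assms(1)] cor_eq[OF assms(2)] dist_Pair_Pair dist_real_def
    by (simp add: power2_eq_square algebra_simps)
  also have "\<dots> = sqrt 2 * sqrt ((X A - X C)^2)" by (simp add: real_sqrt_mult[symmetric] del: real_sqrt_abs)
  finally show ?thesis by simp
qed



definition half :: "real \<Rightarrow> bool \<Rightarrow> real \<times> real \<Rightarrow> real \<times> real \<Rightarrow> (real \<times> real) set" where
  "half c s P Q = (if s then upper_half c P Q else lower_half c P Q)"

lemma circ_eq:
  fixes p q c :: real
  assumes "dist z (midpoint (p, c-p) (q, c-q)) = dist (p, c-p) (q, c-q) / 2"
  shows "(fst z - (fst z + snd z - c)/2 - p) * (fst z - (fst z + snd z - c)/2 - q) = - (((fst z + snd z - c)^2)/4)"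
proof -
  obtain x y where z: "z = (x,y)" by (cases z)
  have m: "midpoint (p, c-p) (q, c-q) = ((p+q)/2, (2*c-p-q)/2)"
    by (simp add: midpoint_def algebra_simps)
  have h1: "(dist z (midpoint (p, c-p) (q, c-q)))^2 = (x - (p+q)/2)^2 + (y - (2*c-p-q)/2)^2"
    unfolding z m dist_Pair_Pair dist_real_def by (simp add: power2_abs)
  have h2: "(dist (p, c-p) (q, c-q))^2 = (p-q)^2 + (p-q)^2"
  proof -
    have "(c-p) - (c-q) = q - p" by simp
    then have "dist (p, c-p) (q, c-q) = sqrt ((p-q)^2 + (p-q)^2)"
      unfolding dist_Pair_Pair dist_real_def by (simp add: power2_abs power2_commute)
    then show ?thesis by simp
  qed
  have "(dist z (midpoint (p, c-p) (q, c-q)))^2 = (dist (p, c-p) (q, c-q))^2 / 4"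
    using arg_cong[OF assms, of "\<lambda>t. t^2"] by (simp add: power_divide)
  then have "(x - (p+q)/2)^2 + (y - (2*c-p-q)/2)^2 = ((p-q)^2 + (p-q)^2)/4"
    unfolding h1 h2 .
  then show ?thesis unfolding z by (simp add: power2_eq_square field_simps)
qed

lemma nocross_zero:
  fixes s u a1 c1 a2 c2 :: real
  assumes "a1 \<le> c1" "a2 \<le> c2"
    and e1: "(s - a1) * (s - c1) = - (u^2/4)" and e2: "(s - a2) * (s - c2) = - (u^2/4)"
    and n1: "\<not>(a1<a2 \<and> a2<c1 \<and> c1<c2)" and n2: "\<not>(a2<a1 \<and> a1<c2 \<and> c2<c1)"
    and n3: "\<not>(a1=a2 \<and> c1=c2)"
  shows "u = 0"
proof (rule ccontr)
  assume "u \<noteq> 0"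
  then have K: "u^2/4 > 0" by simp
  have "(s - a1) * (c1 - s) = - ((s - a1) * (s - c1))" by (simp add: algebra_simps)
  then have p1: "(s - a1) * (c1 - s) > 0" using e1 K by linarith
  have "(s - a2) * (c2 - s) = - ((s - a2) * (s - c2))" by (simp add: algebra_simps)
  then have p2: "(s - a2) * (c2 - s) > 0" using e2 K by linarith
  have i1: "a1 < s \<and> s < c1"
  proof (rule ccontr)
    assume "\<not> ?thesis"
    then have "s \<le> a1 \<or> c1 \<le> s" by auto
    then have "(s - a1) * (c1 - s) \<le> 0"
      using assms(1) by (auto intro: mult_nonpos_nonneg mult_nonneg_nonpos)
    then show False using p1 by simp
  qed
  have i2: "a2 < s \<and> s < c2"
  proof (rule ccontr)
    assume "\<not> ?thesis"
    then have "s \<le> a2 \<or> c2 \<le> s" by auto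
    then have "(s - a2) * (c2 - s) \<le> 0"
      using assms(2) by (auto intro: mult_nonpos_nonneg mult_nonneg_nonpos)
    then show False using p2 by simp
  qed
  have eq: "(s - a1) * (c1 - s) = (s - a2) * (c2 - s)" using e1 e2 by (simp add: algebra_simps)
  have key: "\<And>a c a' c'. a \<le> a' \<Longrightarrow> c' \<le> c \<Longrightarrow> \<not>(a = a' \<and> c = c') \<Longrightarrow> a' < s \<Longrightarrow> s < c'
      \<Longrightarrow> (s - a) * (c - s) > (s - a') * (c' - s)"
  proof -
    fix a c a' c' :: real
    assume h: "a \<le> a'" "c' \<le> c" "\<not>(a = a' \<and> c = c')" "a' < s" "s < c'"
    have d: "(s - a) * (c - s) - (s - a') * (c' - s) = (a' - a) * (c - s) + (s - a') * (c - c')"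
      by (simp add: algebra_simps)
    have "(a' - a) * (c - s) \<ge> 0" "(s - a') * (c - c') \<ge> 0" using h by auto
    moreover have "(a' - a) * (c - s) > 0 \<or> (s - a') * (c - c') > 0" using h by auto
    ultimately show "(s - a) * (c - s) > (s - a') * (c' - s)" using d by linarith
  qed
  show False
  proof (cases "a1 \<le> a2 \<and> c2 \<le> c1")
    case True
    then show ?thesis using key[of a1 a2 c2 c1] n3 i1 i2 eq by auto
  next
    case F1: False
    show ?thesis
    proof (cases "a2 \<le> a1 \<and> c1 \<le> c2")
      case True
      then show ?thesis using key[of a2 a1 c1 c2] n3 i1 i2 eq by auto
    next
      case False
      then show ?thesis using F1 n1 n2 i1 i2 by linarith
    qed
  qed
qed

lemma onD_end:
  fixes p q c :: real
  assumes "dist z (midpoint (p, c-p) (q, c-q)) = dist (p, c-p) (q, c-q) / 2"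
    and "fst z + snd z = c"
  shows "z = (p, c-p) \<or> z = (q, c-q)"
proof -
  have "(fst z - p) * (fst z - q) = 0" using circ_eq[OF assms(1)] assms(2) by simp
  then have "fst z = p \<or> fst z = q" by simp
  moreover have "snd z = c - fst z" using assms(2) by simp
  ultimately show ?thesis by (cases z) auto
qed

lemma G:
  fixes p1 q1 p2 q2 c :: real
  assumes z1: "z \<in> half c s1 (p1, c-p1) (q1, c-q1)" and z2: "z \<in> half c s2 (p2, c-p2) (q2, c-q2)"
    and cond: "s1 \<noteq> s2 \<or> (\<not>(min p1 q1 < min p2 q2 \<and> min p2 q2 < max p1 q1 \<and> max p1 q1 < max p2 q2)
        \<and> \<not>(min p2 q2 < min p1 q1 \<and> min p1 q1 < max p2 q2 \<and> max p2 q2 < max p1 q1)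
        \<and> \<not>(min p1 q1 = min p2 q2 \<and> max p1 q1 = max p2 q2))"
  shows "(z = (p1, c-p1) \<or> z = (q1, c-q1)) \<and> (z = (p2, c-p2) \<or> z = (q2, c-q2))"
proof -
  let ?u = "fst z + snd z - c" and ?s = "fst z - (fst z + snd z - c)/2"
  have d1: "dist z (midpoint (p1, c-p1) (q1, c-q1)) = dist (p1, c-p1) (q1, c-q1) / 2"
    and d2: "dist z (midpoint (p2, c-p2) (q2, c-q2)) = dist (p2, c-p2) (q2, c-q2) / 2"
    using z1 z2 by (auto simp: half_def upper_half_def lower_half_def split: if_splits)
  have "?u = 0"
  proof (cases "s1 = s2")
    case False
    then have "?u \<ge> 0 \<and> ?u \<le> 0" using z1 z2
      by (auto simp: half_def upper_half_def lower_half_def split: if_splits)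
    then show ?thesis by linarith
  next
    case True
    have sym: "\<And>a b. (?s - a) * (?s - b) = (?s - min a b) * (?s - max a b)"
      by (simp add: min_def max_def mult.commute)
    show ?thesis
      apply (rule nocross_zero[of "min p1 q1" "max p1 q1" "min p2 q2" "max p2 q2" ?s])
      using circ_eq[OF d1] circ_eq[OF d2] sym cond True by auto
  qed
  then show ?thesis using onD_end[OF d1] onD_end[OF d2] by auto
qed



locale setting =
  fixes V B R :: "lframe set" and sel :: "lframe \<Rightarrow> lframe \<times> lframe"
    and pos hR hL :: "lframe \<Rightarrow> real"
  assumes intc: "\<And>A C. A \<in> V \<Longrightarrow> C \<in> V \<Longrightarrow> pos A < pos C \<Longrightarrow>
      intersects A C \<longleftrightarrow> (pos C - pos A \<le> hR A \<and> pos C - pos A \<le> hL C)"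
    and BV: "B \<subseteq> V" and RV: "R \<subseteq> V"
    and selB: "\<And>u. u \<in> V \<Longrightarrow> fst (sel u) \<in> B"
    and selR: "\<And>u. u \<in> V \<Longrightarrow> snd (sel u) \<in> R"
    and minsel: "\<And>u b r. u \<in> V \<Longrightarrow> b \<in> B \<Longrightarrow> r \<in> R \<Longrightarrow> intersects b u \<Longrightarrow> intersects r u \<Longrightarrow>
      \<bar>pos (fst (sel u)) - pos (snd (sel u))\<bar> \<le> \<bar>pos b - pos r\<bar>"
    and selI1: "\<And>u. u \<in> V \<Longrightarrow> intersects (fst (sel u)) u"
    and selI2: "\<And>u. u \<in> V \<Longrightarrow> intersects (snd (sel u)) u"
begin

definition PC :: "lframe \<Rightarrow> real \<Rightarrow> real \<Rightarrow> bool" where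
  "PC u a c \<longleftrightarrow> u \<in> V \<and> a < c \<and> c \<le> pos u \<and> (\<exists>A\<in>B\<union>R. pos A = a \<and> intersects A u)
     \<and> (c = pos u \<or> (\<exists>C\<in>B\<union>R. pos C = c \<and> intersects C u))
     \<and> min (pos (fst (sel u))) (pos (snd (sel u))) \<le> a \<and> c \<le> max (pos (fst (sel u))) (pos (snd (sel u)))"

lemma principleP:
  assumes "u \<in> V" "Y \<in> B \<union> R" "intersects Y u"
    "min (pos (fst (sel u))) (pos (snd (sel u))) < pos Y" "pos Y < max (pos (fst (sel u))) (pos (snd (sel u)))"
  shows False
proof (cases "Y \<in> B")
  case True
  have "\<bar>pos (fst (sel u)) - pos (snd (sel u))\<bar> \<le> \<bar>pos Y - pos (snd (sel u))\<bar>"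
    using minsel[OF assms(1) True selR[OF assms(1)] assms(3) selI2[OF assms(1)]] .
  then show ?thesis using assms(4,5) by (auto simp: min_def max_def abs_if split: if_splits)
next
  case False
  then have Y: "Y \<in> R" using assms(2) by auto
  have "\<bar>pos (fst (sel u)) - pos (snd (sel u))\<bar> \<le> \<bar>pos (fst (sel u)) - pos Y\<bar>"
    using minsel[OF assms(1) selB[OF assms(1)] Y selI1[OF assms(1)] assms(3)] .
  then show ?thesis using assms(4,5) by (auto simp: min_def max_def abs_if split: if_splits)
qed

lemma nocross:
  assumes p1: "PC u1 a1 c1" and p2: "PC u2 a2 c2"
  shows "\<not> (a1 < a2 \<and> a2 < c1 \<and> c1 < c2)"
proof
  assume cr: "a1 < a2 \<and> a2 < c1 \<and> c1 < c2"
  have u1: "u1 \<in> V" and u2: "u2 \<in> V" and c1u: "c1 \<le> pos u1" and c2u: "c2 \<le> pos u2"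
    using p1 p2 by (auto simp: PC_def)
  obtain A1 where A1: "A1 \<in> B \<union> R" "pos A1 = a1" "intersects A1 u1" using p1 by (auto simp: PC_def)
  obtain A2 where A2: "A2 \<in> B \<union> R" "pos A2 = a2" "intersects A2 u2" using p2 by (auto simp: PC_def)
  have A1V: "A1 \<in> V" and A2V: "A2 \<in> V" using A1 A2 BV RV by auto
  have h1: "pos u1 - a1 \<le> hR A1 \<and> pos u1 - a1 \<le> hL u1"
    using intc[OF A1V u1] A1 cr c1u by auto
  have h2: "pos u2 - a2 \<le> hR A2 \<and> pos u2 - a2 \<le> hL u2"
    using intc[OF A2V u2] A2 cr c2u by auto
  show False
  proof (cases "pos u1 \<le> pos u2")
    case True
    have "intersects A2 u1" using intc[OF A2V u1] A2 h1 h2 True cr c1u by auto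
    then show False
      using principleP[OF u1 A2(1)] A2 p1 cr by (auto simp: PC_def)
  next
    case False
    then have "c1 \<noteq> pos u1" using cr c2u by auto
    then obtain C1 where C1: "C1 \<in> B \<union> R" "pos C1 = c1" "intersects C1 u1" using p1 by (auto simp: PC_def)
    have C1V: "C1 \<in> V" using C1 BV RV by auto
    have h3: "pos u1 - c1 \<le> hR C1" using intc[OF C1V u1] C1 c1u \<open>c1 \<noteq> pos u1\<close> by auto
    have "intersects C1 u2" using intc[OF C1V u2] C1 h3 h2 False cr c2u by auto
    then show False
      using principleP[OF u2 C1(1)] C1 p2 cr by (auto simp: PC_def)
  qed
qed

end



definition pq :: "(lframe \<times> lframe \<Rightarrow> lframe) \<Rightarrow> lframe \<times> lframe \<Rightarrow> lframe \<times> lframe" where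
  "pq wit e = (if from_left (fst e) (wit e) \<and> from_below (snd e) (wit e) then (fst e, snd e) else (snd e, fst e))"

definition pieces :: "lframe set \<Rightarrow> (lframe \<Rightarrow> lframe \<times> lframe) \<Rightarrow> (lframe \<times> lframe \<Rightarrow> lframe)
   \<Rightarrow> lframe \<times> lframe \<Rightarrow> (bool \<times> lframe \<times> lframe) set" where
  "pieces V sel wit e = (if top_arc V sel e then {(True, fst e, snd e)}
     else if down_arc V sel e then {(False, fst e, snd e)}
     else {(True, fst (pq wit e), wit e), (False, wit e, snd (pq wit e))})"

lemma curve_eq:
  "arc_curve c V sel wit e = (\<Union>(s,A,C)\<in>pieces V sel wit e. half c s (cor A) (cor C))"
  unfolding arc_curve_def pieces_def pq_def half_def Let_def
  by (auto split: prod.splits if_splits)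

lemma min_neg: "min (- a) (- b) = - max a (b::real)" and max_neg: "max (- a) (- b) = - min a (b::real)"
  by (auto simp: min_def max_def)



locale mainctx =
  fixes c :: real and V B R :: "lframe set"
    and sel :: "lframe \<Rightarrow> lframe \<times> lframe" and wit :: "lframe \<times> lframe \<Rightarrow> lframe"
  assumes fin: "finite V"
    and anch: "\<forall>L\<in>V. anchored_above c L"
    and inj: "inj_on cor V"
    and domB: "dominating V B" and domR: "dominating V R" and BR: "B \<inter> R = {}"
    and vs: "valid_selection V B R sel"
    and vw: "valid_witness_choice V sel wit"
begin

lemma an: "L \<in> V \<Longrightarrow> anchored_above c L" using anch by auto

lemma BV: "B \<subseteq> V" and RV: "R \<subseteq> V" using domB domR by (auto simp: dominating_def)

lemma Xinj: "A \<in> V \<Longrightarrow> C \<in> V \<Longrightarrow> X A = X C \<Longrightarrow> A = C"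
  using inj cor_eq[OF an] cor_eq[OF an] by (metis inj_onD)

lemma sel_props: "u \<in> V \<Longrightarrow> fst (sel u) \<in> B \<and> snd (sel u) \<in> R
    \<and> intersects (fst (sel u)) u \<and> intersects (snd (sel u)) u"
  using vs by (auto simp: valid_selection_def)

lemma minsel: "u \<in> V \<Longrightarrow> b \<in> B \<Longrightarrow> r \<in> R \<Longrightarrow> intersects b u \<Longrightarrow> intersects r u \<Longrightarrow>
      \<bar>X (fst (sel u)) - X (snd (sel u))\<bar> \<le> \<bar>X b - X r\<bar>"
proof -
  assume a: "u \<in> V" "b \<in> B" "r \<in> R" "intersects b u" "intersects r u"
  then have "dist (cor (fst (sel u))) (cor (snd (sel u))) \<le> dist (cor b) (cor r)"
    using vs by (auto simp: valid_selection_def)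
  moreover have "fst (sel u) \<in> V" "snd (sel u) \<in> V" "b \<in> V" "r \<in> V"
    using sel_props[OF a(1)] a BV RV by auto
  ultimately show ?thesis using dist_cor[OF an an] by simp
qed

lemma set1: "setting V B R sel X hlen vlen"
  unfolding setting_def
  using int_char[OF an an] BV RV sel_props minsel by auto

lemma set2: "setting V B R sel (\<lambda>L. - X L) vlen hlen"
proof -
  have "\<And>A C. A \<in> V \<Longrightarrow> C \<in> V \<Longrightarrow> - X A < - X C \<Longrightarrow>
      intersects A C \<longleftrightarrow> (- X C - - X A \<le> vlen A \<and> - X C - - X A \<le> hlen C)"
  proof -
    fix A C assume "A \<in> V" "C \<in> V" "- X A < - X C"
    then have "intersects C A \<longleftrightarrow> X A - X C \<le> hlen C \<and> X A - X C \<le> vlen A"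
      using int_char[OF an an] by auto
    then show "intersects A C \<longleftrightarrow> (- X C - - X A \<le> vlen A \<and> - X C - - X A \<le> hlen C)"
    proof -
      have "intersects A C \<longleftrightarrow> intersects C A" using int_sym[of A C] int_sym[of C A] by blast
      moreover have "- X C - - X A = X A - X C" by simp
      ultimately show ?thesis using \<open>intersects C A \<longleftrightarrow> _\<close> by (simp add: conj_commute)
    qed
  qed
  moreover have "\<And>u b r. u \<in> V \<Longrightarrow> b \<in> B \<Longrightarrow> r \<in> R \<Longrightarrow> intersects b u \<Longrightarrow> intersects r u \<Longrightarrow>
      \<bar>- X (fst (sel u)) - - X (snd (sel u))\<bar> \<le> \<bar>- X b - - X r\<bar>"
    using minsel by (simp add: abs_minus_commute)
  ultimately show ?thesis unfolding setting_def using BV RV sel_props by auto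
qed

lemma arcE: assumes "e \<in> arcs V sel"
  shows "fst e \<in> B" "snd e \<in> R" "fst e \<in> V" "snd e \<in> V" "fst e \<noteq> snd e" "X (fst e) \<noteq> X (snd e)"
    "wit e \<in> V" "sel (wit e) = e" "intersects (fst e) (wit e)" "intersects (snd e) (wit e)"
proof -
  obtain u where u: "u \<in> V" "sel u = e" using assms by (auto simp: arcs_def)
  show b: "fst e \<in> B" and r: "snd e \<in> R" using sel_props[OF u(1)] u by auto
  show "fst e \<in> V" "snd e \<in> V" using b r BV RV by auto
  show ne: "fst e \<noteq> snd e" using b r BR by auto
  show "X (fst e) \<noteq> X (snd e)" using Xinj ne \<open>fst e \<in> V\<close> \<open>snd e \<in> V\<close> by blast
  have w: "witness V sel (wit e) e" using vw assms by (auto simp: valid_witness_choice_def)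
  then show wV: "wit e \<in> V" "sel (wit e) = e" by (auto simp: witness_def)
  show "intersects (fst e) (wit e)" "intersects (snd e) (wit e)" using sel_props[OF wV(1)] wV(2) by auto
qed

lemma top_props: assumes "e \<in> arcs V sel" "top_arc V sel e"
  shows "from_left (fst e) (wit e)" "from_left (snd e) (wit e)"
  using vw assms by (auto simp: valid_witness_choice_def)

lemma down_props: assumes "e \<in> arcs V sel" "down_arc V sel e"
  shows "from_below (fst e) (wit e)" "from_below (snd e) (wit e)"
  using vw assms by (auto simp: valid_witness_choice_def)

lemma mixed_props: assumes e: "e \<in> arcs V sel" and nt: "\<not> top_arc V sel e" and nd: "\<not> down_arc V sel e"
  shows "(fst (pq wit e) = fst e \<and> snd (pq wit e) = snd e) \<or> (fst (pq wit e) = snd e \<and> snd (pq wit e) = fst e)"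
    "intersects (fst (pq wit e)) (wit e)" "intersects (snd (pq wit e)) (wit e)"
    "X (fst (pq wit e)) < X (wit e)" "X (wit e) < X (snd (pq wit e))"
proof -
  have w: "witness V sel (wit e) e" using arcE[OF e] by (auto simp: witness_def)
  have nl: "\<not> (from_left (fst e) (wit e) \<and> from_left (snd e) (wit e))"
    using nt w unfolding top_arc_def by blast
  have nb: "\<not> (from_below (fst e) (wit e) \<and> from_below (snd e) (wit e))"
    using nt nd w unfolding down_arc_def by blast
  note i = arcE(9,10)[OF e]
  show "(fst (pq wit e) = fst e \<and> snd (pq wit e) = snd e) \<or> (fst (pq wit e) = snd e \<and> snd (pq wit e) = fst e)"
    by (auto simp: pq_def)
  show "intersects (fst (pq wit e)) (wit e)" "intersects (snd (pq wit e)) (wit e)"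
    using i by (auto simp: pq_def)
  show "X (fst (pq wit e)) < X (wit e)" "X (wit e) < X (snd (pq wit e))"
    using i nl nb by (auto simp: pq_def from_left_def from_below_def X_def)
qed

lemma w_unc: assumes e: "e \<in> arcs V sel" and nt: "\<not> top_arc V sel e" and nd: "\<not> down_arc V sel e"
  shows "wit e \<notin> B \<union> R"
proof
  assume a: "wit e \<in> B \<union> R"
  note m = mixed_props[OF e nt nd]
  have "sel (wit e) = e" "wit e \<in> V" using arcE[OF e] by auto
  then show False
    using setting.principleP[OF set1 \<open>wit e \<in> V\<close> a int_self] m
    by (auto simp: min_def max_def)
qed

end



context mainctx begin

abbreviation "PCU \<equiv> setting.PC V B R sel X"
abbreviation "PCD \<equiv> setting.PC V B R sel (\<lambda>L. - X L)"

lemma pieces_cases: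
  assumes "(s, A, C) \<in> pieces V sel wit e"
  shows "(top_arc V sel e \<and> s \<and> A = fst e \<and> C = snd e)
    \<or> (\<not> top_arc V sel e \<and> down_arc V sel e \<and> \<not> s \<and> A = fst e \<and> C = snd e)
    \<or> (\<not> top_arc V sel e \<and> \<not> down_arc V sel e \<and> s \<and> A = fst (pq wit e) \<and> C = wit e)
    \<or> (\<not> top_arc V sel e \<and> \<not> down_arc V sel e \<and> \<not> s \<and> A = wit e \<and> C = snd (pq wit e))"
  using assms by (auto simp: pieces_def split: if_splits)

lemma PF_ends:
  assumes e: "e \<in> arcs V sel" and p: "(s, A, C) \<in> pieces V sel wit e" and F: "F = A \<or> F = C"
  shows "F \<in> V \<and> (F = fst e \<or> F = snd e \<or> (F \<notin> B \<union> R \<and> sel F = e))"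
  using pieces_cases[OF p] F arcE[OF e] mixed_props(1)[OF e] w_unc[OF e] by auto

lemma PF_ne:
  assumes e: "e \<in> arcs V sel" and p: "(s, A, C) \<in> pieces V sel wit e"
  shows "X A \<noteq> X C"
  using pieces_cases[OF p] arcE[OF e] mixed_props[OF e] by force

lemma PF_up:
  assumes e: "e \<in> arcs V sel" and p: "(True, A, C) \<in> pieces V sel wit e"
  shows "\<exists>u. PCU u (min (X A) (X C)) (max (X A) (X C))"
proof -
  note arcE[OF e]
  consider (t) "top_arc V sel e" "A = fst e" "C = snd e"
    | (m) "\<not> top_arc V sel e" "\<not> down_arc V sel e" "A = fst (pq wit e)" "C = wit e"
    using pieces_cases[OF p] by auto
  then show ?thesis
  proof cases
    case t
    note tp = top_props[OF e t(1)]
    have "PCU (wit e) (min (X A) (X C)) (max (X A) (X C))"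
      unfolding setting.PC_def[OF set1] using t tp arcE[OF e]
      by (auto simp: from_left_def X_def[symmetric] min_def max_def)
    then show ?thesis by blast
  next
    case m
    note mp = mixed_props[OF e m(1,2)]
    have "PCU (wit e) (min (X A) (X C)) (max (X A) (X C))"
      unfolding setting.PC_def[OF set1] using m mp arcE[OF e]
      by (auto simp: min_def max_def)
    then show ?thesis by blast
  qed
qed

lemma PF_down:
  assumes e: "e \<in> arcs V sel" and p: "(False, A, C) \<in> pieces V sel wit e"
  shows "\<exists>u. PCD u (min (- X A) (- X C)) (max (- X A) (- X C))"
proof -
  consider (d) "\<not> top_arc V sel e" "down_arc V sel e" "A = fst e" "C = snd e"
    | (m) "\<not> top_arc V sel e" "\<not> down_arc V sel e" "A = wit e" "C = snd (pq wit e)"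
    using pieces_cases[OF p] by auto
  then show ?thesis
  proof cases
    case d
    note tp = down_props[OF e d(2)]
    have "PCD (wit e) (min (- X A) (- X C)) (max (- X A) (- X C))"
      unfolding setting.PC_def[OF set2] using d tp arcE[OF e]
      by (auto simp: from_below_def X_def[symmetric] min_def max_def)
    then show ?thesis by blast
  next
    case m
    note mp = mixed_props[OF e m(1,2)]
    have "PCD (wit e) (min (- X A) (- X C)) (max (- X A) (- X C))"
      unfolding setting.PC_def[OF set2] using m mp arcE[OF e]
      by (auto simp: min_def max_def)
    then show ?thesis by blast
  qed
qed

end



context mainctx begin

lemma frames_ends:
  assumes e1: "e1 \<in> arcs V sel" and e2: "e2 \<in> arcs V sel" and ne: "e1 \<noteq> e2"
    and p1: "(s1, A1, C1) \<in> pieces V sel wit e1" and p2: "(s2, A2, C2) \<in> pieces V sel wit e2"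
    and F1: "F = A1 \<or> F = C1" and F2: "F = A2 \<or> F = C2"
  shows "(F = fst e1 \<or> F = snd e1) \<and> (F = fst e2 \<or> F = snd e2)"
proof -
  have a: "F \<in> V \<and> (F = fst e1 \<or> F = snd e1 \<or> (F \<notin> B \<union> R \<and> sel F = e1))"
    using PF_ends[OF e1 p1 F1] .
  have b: "F \<in> V \<and> (F = fst e2 \<or> F = snd e2 \<or> (F \<notin> B \<union> R \<and> sel F = e2))"
    using PF_ends[OF e2 p2 F2] .
  show ?thesis using a b arcE(1,2)[OF e1] arcE(1,2)[OF e2] ne by auto
qed

lemma same_frames:
  assumes e1: "e1 \<in> arcs V sel" and e2: "e2 \<in> arcs V sel" and ne: "e1 \<noteq> e2"
    and p1: "(s1, A1, C1) \<in> pieces V sel wit e1" and p2: "(s2, A2, C2) \<in> pieces V sel wit e2"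
    and eq: "{A1, C1} = {A2, C2}"
  shows False
proof -
  have hA: "(A1 = fst e1 \<or> A1 = snd e1) \<and> (A1 = fst e2 \<or> A1 = snd e2)"
    using frames_ends[OF e1 e2 ne p1 p2, of A1] eq by (auto simp: doubleton_eq_iff)
  have hC: "(C1 = fst e1 \<or> C1 = snd e1) \<and> (C1 = fst e2 \<or> C1 = snd e2)"
    using frames_ends[OF e1 e2 ne p1 p2, of C1] eq by (auto simp: doubleton_eq_iff)
  have "A1 \<noteq> C1" using PF_ne[OF e1 p1] by auto
  then have "fst e1 = fst e2 \<and> snd e1 = snd e2"
    using hA hC arcE(1,2,5)[OF e1] arcE(1,2,5)[OF e2] BR by auto
  then show False using ne by (simp add: prod_eq_iff)
qed

lemma X_same:
  assumes "A1 \<in> V" "C1 \<in> V" "A2 \<in> V" "C2 \<in> V"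
    and "min (X A1) (X C1) = min (X A2) (X C2)" "max (X A1) (X C1) = max (X A2) (X C2)"
  shows "{A1, C1} = {A2, C2}"
proof -
  have "(X A1 = X A2 \<and> X C1 = X C2) \<or> (X A1 = X C2 \<and> X C1 = X A2)"
    using assms(5,6) by (auto simp: min_def max_def split: if_splits)
  then show ?thesis
  proof
    assume h: "X A1 = X A2 \<and> X C1 = X C2"
    have "A1 = A2" using Xinj[OF assms(1,3)] h by blast
    moreover have "C1 = C2" using Xinj[OF assms(2,4)] h by blast
    ultimately show ?thesis by simp
  next
    assume h: "X A1 = X C2 \<and> X C1 = X A2"
    have "A1 = C2" using Xinj[OF assms(1,4)] h by blast
    moreover have "C1 = A2" using Xinj[OF assms(2,3)] h by blast
    ultimately show ?thesis by auto
  qed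
qed

lemma result:
  "\<forall>e1\<in>arcs V sel. \<forall>e2\<in>arcs V sel. e1 \<noteq> e2 \<longrightarrow>
     arc_curve c V sel wit e1 \<inter> arc_curve c V sel wit e2
       \<subseteq> cor ` ({fst e1, snd e1} \<inter> {fst e2, snd e2})"
proof (intro ballI impI subsetI)
  fix e1 e2 z
  assume e1: "e1 \<in> arcs V sel" and e2: "e2 \<in> arcs V sel" and ne: "e1 \<noteq> e2"
    and z: "z \<in> arc_curve c V sel wit e1 \<inter> arc_curve c V sel wit e2"
  obtain s1 A1 C1 where p1: "(s1, A1, C1) \<in> pieces V sel wit e1" and z1: "z \<in> half c s1 (cor A1) (cor C1)"
    using z unfolding curve_eq by auto
  obtain s2 A2 C2 where p2: "(s2, A2, C2) \<in> pieces V sel wit e2" and z2: "z \<in> half c s2 (cor A2) (cor C2)"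
    using z unfolding curve_eq by auto
  have V: "A1 \<in> V" "C1 \<in> V" "A2 \<in> V" "C2 \<in> V"
    using PF_ends[OF e1 p1] PF_ends[OF e2 p2] by blast+
  have nid: "\<not> (min (X A1) (X C1) = min (X A2) (X C2) \<and> max (X A1) (X C1) = max (X A2) (X C2))"
    using X_same[OF V] same_frames[OF e1 e2 ne p1 p2] by blast
  have cond: "s1 \<noteq> s2 \<or> (\<not>(min (X A1) (X C1) < min (X A2) (X C2) \<and> min (X A2) (X C2) < max (X A1) (X C1) \<and> max (X A1) (X C1) < max (X A2) (X C2))
        \<and> \<not>(min (X A2) (X C2) < min (X A1) (X C1) \<and> min (X A1) (X C1) < max (X A2) (X C2) \<and> max (X A2) (X C2) < max (X A1) (X C1))
        \<and> \<not>(min (X A1) (X C1) = min (X A2) (X C2) \<and> max (X A1) (X C1) = max (X A2) (X C2)))"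
  proof (cases "s1 = s2")
    case False then show ?thesis by simp
  next
    case True
    show ?thesis
    proof (cases s1)
      case True
      then have "(True, A1, C1) \<in> pieces V sel wit e1" "(True, A2, C2) \<in> pieces V sel wit e2"
        using p1 p2 \<open>s1 = s2\<close> by auto
      then obtain u1 u2 where "PCU u1 (min (X A1) (X C1)) (max (X A1) (X C1))"
          "PCU u2 (min (X A2) (X C2)) (max (X A2) (X C2))"
        using PF_up[OF e1] PF_up[OF e2] by blast
      then show ?thesis using setting.nocross[OF set1] nid by blast
    next
      case False
      then have "(False, A1, C1) \<in> pieces V sel wit e1" "(False, A2, C2) \<in> pieces V sel wit e2"
        using p1 p2 \<open>s1 = s2\<close> by auto
      then obtain u1 u2 where "PCD u1 (min (- X A1) (- X C1)) (max (- X A1) (- X C1))"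
          "PCD u2 (min (- X A2) (- X C2)) (max (- X A2) (- X C2))"
        using PF_down[OF e1] PF_down[OF e2] by blast
      then have "\<not> (min (- X A1) (- X C1) < min (- X A2) (- X C2) \<and> min (- X A2) (- X C2) < max (- X A1) (- X C1) \<and> max (- X A1) (- X C1) < max (- X A2) (- X C2))"
         "\<not> (min (- X A2) (- X C2) < min (- X A1) (- X C1) \<and> min (- X A1) (- X C1) < max (- X A2) (- X C2) \<and> max (- X A2) (- X C2) < max (- X A1) (- X C1))"
        using setting.nocross[OF set2] by blast+
      then show ?thesis using nid unfolding min_neg max_neg by linarith
    qed
  qed
  have zz: "(z = (X A1, c - X A1) \<or> z = (X C1, c - X C1)) \<and> (z = (X A2, c - X A2) \<or> z = (X C2, c - X C2))"
    apply (rule G[OF _ _ cond])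
    using z1 z2 cor_eq[OF an[OF V(1)]] cor_eq[OF an[OF V(2)]] cor_eq[OF an[OF V(3)]] cor_eq[OF an[OF V(4)]]
    by auto
  then obtain F1 F2 where F: "F1 = A1 \<or> F1 = C1" "F2 = A2 \<or> F2 = C2" "z = cor F1" "z = cor F2"
    using cor_eq[OF an[OF V(1)]] cor_eq[OF an[OF V(2)]] cor_eq[OF an[OF V(3)]] cor_eq[OF an[OF V(4)]]
    by metis
  have "F1 \<in> V" "F2 \<in> V" using F V by auto
  then have "F1 = F2" using F inj by (metis inj_onD)
  then have "(F1 = fst e1 \<or> F1 = snd e1) \<and> (F1 = fst e2 \<or> F1 = snd e2)"
    using frames_ends[OF e1 e2 ne p1 p2] F by blast
  then show "z \<in> cor ` ({fst e1, snd e1} \<inter> {fst e2, snd e2})" using F by auto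
qed

end


theorem mainTheorem4:
  fixes c :: real and V B R :: "lframe set"
    and sel :: "lframe \<Rightarrow> lframe \<times> lframe" and wit :: "lframe \<times> lframe \<Rightarrow> lframe"
  assumes "finite V"
    and "\<forall>L\<in>V. anchored_above c L"
    and "inj_on cor V"
    and "dominating V B" and "dominating V R" and "B \<inter> R = {}"
    and "valid_selection V B R sel"
    and "valid_witness_choice V sel wit"
  shows "\<forall>e1\<in>arcs V sel. \<forall>e2\<in>arcs V sel. e1 \<noteq> e2 \<longrightarrow>
           arc_curve c V sel wit e1 \<inter> arc_curve c V sel wit e2
             \<subseteq> cor ` ({fst e1, snd e1} \<inter> {fst e2, snd e2})"
proof -
  interpret mainctx c V B R sel wit using assms by unfold_locales
  show ?thesis by (rule result)
qed

end
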